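(* Let ${\bf i}=(i_1,\dots,i_N)$ be a reduced word for $w_0$ and identify $\mathbb Z^N$ with the cellular crystal $B_{\bf i}=B_{i_1}\otimes\cdots\otimes B_{i_N}$ via $(x_1,\dots,x_N)\leftrightarrow(x_1)_{i_1}\otimes\cdots\otimes(x_N)_{i_N}$. Then for every $i\in I$, $x\in\mathbb Z^N$ and $H\in{\mathcal H}_{\bf i}$, $\tilde e_i(x+H)=\tilde e_i(x)+H$ and $\tilde f_i(x+H)=\tilde f_i(x)+H$.
   Context: $\mathfrak g$ simple with index set $I$, simple roots $\alpha_i$, coroots $h_i$, Cartan matrix $a_{ij}=\alpha_j(h_i)$, $w_0$ longest Weyl element of length $N$. Crystal $B_i=\{(x)_i\mid x\in\mathbb Z\}$: ${\rm wt}((x)_i)=x\alpha_i$, $\varepsilon_i((x)_i)=-x$, $\varphi_i((x)_i)=x$, $\tilde e_i(x)_i=(x+1)_i$, $\tilde f_i(x)_i=(x-1)_i$, and for $j\neq i$: $\varepsilon_j=\varphi_j=-\infty$, $\tilde e_j=\tilde f_j=0$. Tensor product of crystals: ${\rm wt}(b_1\otimes b_2)={\rm wt}(b_1)+{\rm wt}(b_2)$, $\varepsilon_i(b_1\otimes b_2)=\max(\varepsilon_i(b_1),\varepsilon_i(b_2)-\langle h_i,{\rm wt}(b_1)\rangle)$, $\varphi_i(b_1\otimes b_2)=\max(\varphi_i(b_2),\varphi_i(b_1)+\langle h_i,{\rm wt}(b_2)\rangle)$, $\tilde e_i(b_1\otimes b_2)=\tilde e_ib_1\otimes b_2$ if $\varphi_i(b_1)\ge\varepsilon_i(b_2)$,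 else $b_1\otimes\tilde e_ib_2$; $\tilde f_i(b_1\otimes b_2)=\tilde f_ib_1\otimes b_2$ if $\varphi_i(b_1)>\varepsilon_i(b_2)$, else $b_1\otimes\tilde f_ib_2$ (multiple tensor products are associative). For $k\in[1,N]$, $k^{(+)}:=\min\{l>k\mid i_l=i_k\}$ when it exists; $\beta_k(x)=x_k+\sum_{k<j<k^{(+)}}a_{i_k,i_j}x_j+x_{k^{(+)}}$; ${\mathcal H}_{\bf i}:=\{x\in\mathbb Z^N\mid\beta_k(x)=0$ for all $k$ with $k^{(+)}\le N\}$. *)

theory Defs
  imports Main "HOL-Library.Extended_Real"
begin

text \<open>Convention: a i j = alpha_j(h_i). The index set I is a finite type 'i.\<close>

definition finite_type_cartan :: "('i::finite \<Rightarrow> 'i \<Rightarrow> int) \<Rightarrow> bool" where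
  "finite_type_cartan a \<longleftrightarrow>
     (\<forall>i. a i i = 2) \<and>
     (\<forall>i j. i \<noteq> j \<longrightarrow> a i j \<le> 0) \<and>
     (\<forall>i j. a i j = 0 \<longleftrightarrow> a j i = 0) \<and>
     (\<exists>d :: 'i \<Rightarrow> real. (\<forall>i. d i > 0) \<and>
        (\<forall>i j. d i * of_int (a i j) = d j * of_int (a j i)) \<and>
        (\<forall>v :: 'i \<Rightarrow> real. v \<noteq> (\<lambda>_. 0) \<longrightarrow>
            (\<Sum>i\<in>UNIV. \<Sum>j\<in>UNIV. v i * d i * of_int (a i j) * v j) > 0)) \<and>
     (\<forall>J :: 'i set. J \<noteq> {} \<and> J \<noteq> UNIV \<longrightarrow> (\<exists>j\<in>J. \<exists>k. k \<notin> J \<and> a j k \<noteq> 0))"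

text \<open>pairing a i c = <h_i, sum_j c_j alpha_j>\<close>
definition pairing :: "('i::finite \<Rightarrow> 'i \<Rightarrow> int) \<Rightarrow> 'i \<Rightarrow> ('i \<Rightarrow> int) \<Rightarrow> int" where
  "pairing a i c = (\<Sum>j\<in>UNIV. a i j * c j)"

definition simple_root :: "'i \<Rightarrow> 'i \<Rightarrow> int" where
  "simple_root i = (\<lambda>j. if j = i then 1 else 0)"

definition sref :: "('i::finite \<Rightarrow> 'i \<Rightarrow> int) \<Rightarrow> 'i \<Rightarrow> ('i \<Rightarrow> int) \<Rightarrow> ('i \<Rightarrow> int)" where
  "sref a i c = (\<lambda>j. c j - (if j = i then pairing a i c else 0))"

text \<open>Action of s_{i_1} ... s_{i_N} (rightmost factor acts first).\<close>
definition word_act :: "('i::finite \<Rightarrow> 'i \<Rightarrow> int) \<Rightarrow> 'i list \<Rightarrow> ('i \<Rightarrow> int) \<Rightarrow> ('i \<Rightarrow> int)" where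
  "word_act a ws = foldr (sref a) ws"

text \<open>ws is a reduced word for the longest element w_0: the element it represents maps every
  simple root (hence every positive root) to a non-positive combination of simple roots
  (this characterises w_0), and no shorter word represents the same Weyl group element.\<close>
definition reduced_word_w0 :: "('i::finite \<Rightarrow> 'i \<Rightarrow> int) \<Rightarrow> 'i list \<Rightarrow> bool" where
  "reduced_word_w0 a ws \<longleftrightarrow>
     (\<forall>j k. word_act a ws (simple_root j) k \<le> 0) \<and>
     (\<forall>ws'. word_act a ws' = word_act a ws \<longrightarrow> length ws \<le> length ws')"

text \<open>Elements: lists xs of integers with length xs = length ws; xs corresponds to
  (x_1)_{i_1} (x) ... (x) (x_N)_{i_N}, bracketed as B_{i_1} (x) (B_{i_2} (x) ( ... )).
  -infinity is the ereal value -\<infinity>; the element 0 is None.\<close>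

fun wtT :: "'i list \<Rightarrow> int list \<Rightarrow> ('i \<Rightarrow> int)" where
  "wtT (w # ws) (x # xs) = (\<lambda>j. (if j = w then x else 0) + wtT ws xs j)"
| "wtT _ _ = (\<lambda>j. 0)"

definition eps1 :: "'i \<Rightarrow> 'i \<Rightarrow> int \<Rightarrow> ereal" where
  "eps1 i w x = (if i = w then ereal (of_int (- x)) else - \<infinity>)"

definition phi1 :: "'i \<Rightarrow> 'i \<Rightarrow> int \<Rightarrow> ereal" where
  "phi1 i w x = (if i = w then ereal (of_int x) else - \<infinity>)"

fun epsT :: "('i::finite \<Rightarrow> 'i \<Rightarrow> int) \<Rightarrow> 'i \<Rightarrow> 'i list \<Rightarrow> int list \<Rightarrow> ereal" where
  "epsT a i [w] [x] = eps1 i w x"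
| "epsT a i (w # ws) (x # xs) =
     max (eps1 i w x) (epsT a i ws xs - ereal (of_int (pairing a i (wtT [w] [x]))))"
| "epsT a i _ _ = - \<infinity>"

fun phiT :: "('i::finite \<Rightarrow> 'i \<Rightarrow> int) \<Rightarrow> 'i \<Rightarrow> 'i list \<Rightarrow> int list \<Rightarrow> ereal" where
  "phiT a i [w] [x] = phi1 i w x"
| "phiT a i (w # ws) (x # xs) =
     max (phiT a i ws xs) (phi1 i w x + ereal (of_int (pairing a i (wtT ws xs))))"
| "phiT a i _ _ = - \<infinity>"

fun eT :: "('i::finite \<Rightarrow> 'i \<Rightarrow> int) \<Rightarrow> 'i \<Rightarrow> 'i list \<Rightarrow> int list \<Rightarrow> int list option" where
  "eT a i [w] [x] = (if i = w then Some [x + 1] else None)"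
| "eT a i (w # ws) (x # xs) =
     (if phi1 i w x \<ge> epsT a i ws xs
      then (if i = w then Some ((x + 1) # xs) else None)
      else map_option (\<lambda>ys. x # ys) (eT a i ws xs))"
| "eT a i _ _ = None"

fun fT :: "('i::finite \<Rightarrow> 'i \<Rightarrow> int) \<Rightarrow> 'i \<Rightarrow> 'i list \<Rightarrow> int list \<Rightarrow> int list option" where
  "fT a i [w] [x] = (if i = w then Some [x - 1] else None)"
| "fT a i (w # ws) (x # xs) =
     (if phi1 i w x > epsT a i ws xs
      then (if i = w then Some ((x - 1) # xs) else None)
      else map_option (\<lambda>ys. x # ys) (fT a i ws xs))"
| "fT a i _ _ = None"

text \<open>0-indexed: for positions k < l < N with ws!l = ws!k and no occurrence of ws!k strictly
  between (i.e. l = k^(+)), beta_k(H) = H_k + sum_{k<j<l} a_{i_k i_j} H_j + H_l = 0.\<close>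
definition Hset :: "('i \<Rightarrow> 'i \<Rightarrow> int) \<Rightarrow> 'i list \<Rightarrow> int list set" where
  "Hset a ws = {H. length H = length ws \<and>
     (\<forall>k l. k < l \<and> l < length ws \<and> ws ! l = ws ! k \<and>
            (\<forall>j. k < j \<and> j < l \<longrightarrow> ws ! j \<noteq> ws ! k) \<longrightarrow>
        H ! k + (\<Sum>j\<in>{k<..<l}. a (ws ! k) (ws ! j) * H ! j) + H ! l = 0)}"

definition vadd :: "int list \<Rightarrow> int list \<Rightarrow> int list" where
  "vadd xs ys = map2 (+) xs ys"

end

theory Submission
  imports Defs
begin

fun cst :: "('i::finite \<Rightarrow> 'i \<Rightarrow> int) \<Rightarrow> 'i \<Rightarrow> 'i list \<Rightarrow> int list \<Rightarrow> int" where
  "cst a i (w # ws) (h # hs) = (if w = i then - h else cst a i ws hs - a i w * h)"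
| "cst a i _ _ = 0"

lemma vadd_Cons[simp]: "vadd (x # xs) (h # hs) = (x + h) # vadd xs hs"
  by (simp add: vadd_def)

lemma vadd_len[simp]: "length (vadd xs hs) = min (length xs) (length hs)"
  by (simp add: vadd_def)

lemma shift_sum: "(\<Sum>j\<in>{Suc k<..<Suc l}. f j) = (\<Sum>j\<in>{k<..<l}. f (Suc j))"
proof -
  have "(\<Sum>j\<in>{Suc k<..<Suc l}. f j) = (\<Sum>j\<in>{Suc (Suc k)..<Suc l}. f j)"
    by (simp add: atLeastSucLessThan_greaterThanLessThan)
  also have "\<dots> = (\<Sum>j\<in>{Suc k..<l}. f (Suc j))"
    by (rule sum.shift_bounds_Suc_ivl)
  also have "\<dots> = (\<Sum>j\<in>{k<..<l}. f (Suc j))"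
    by (simp add: atLeastSucLessThan_greaterThanLessThan)
  finally show ?thesis .
qed

lemma Hset_D:
  assumes "H \<in> Hset a ws" "k < l" "l < length ws" "ws ! l = ws ! k"
    "\<forall>j. k < j \<and> j < l \<longrightarrow> ws ! j \<noteq> ws ! k"
  shows "H ! k + (\<Sum>j\<in>{k<..<l}. a (ws ! k) (ws ! j) * H ! j) + H ! l = 0"
proof -
  have P: "\<forall>k l. k < l \<and> l < length ws \<and> ws ! l = ws ! k \<and>
            (\<forall>j. k < j \<and> j < l \<longrightarrow> ws ! j \<noteq> ws ! k) \<longrightarrow>
        H ! k + (\<Sum>j\<in>{k<..<l}. a (ws ! k) (ws ! j) * H ! j) + H ! l = 0"
    using assms(1) unfolding Hset_def mem_Collect_eq by (rule conjunct2)
  have "k < l \<and> l < length ws \<and> ws ! l = ws ! k \<and>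
            (\<forall>j. k < j \<and> j < l \<longrightarrow> ws ! j \<noteq> ws ! k)" using assms(2-5) by (intro conjI)
  then show ?thesis using P by (intro mp[OF spec[OF spec[OF P]]])
qed

lemma shift_sum0: "(\<Sum>j\<in>{0<..<Suc k}. f j) = (\<Sum>j<k. f (Suc j))"
proof -
  have "(\<Sum>j\<in>{0<..<Suc k}. f j) = (\<Sum>j\<in>{Suc 0..<Suc k}. f j)"
    by (simp add: atLeastSucLessThan_greaterThanLessThan)
  also have "\<dots> = (\<Sum>j\<in>{0..<k}. f (Suc j))"
    by (rule sum.shift_bounds_Suc_ivl)
  also have "\<dots> = (\<Sum>j<k. f (Suc j))"
    by (simp add: atLeast0LessThan)
  finally show ?thesis .
qed

lemma Hset_tl: assumes "h # hs \<in> Hset a (w # ws)" shows "hs \<in> Hset a ws"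
  unfolding Hset_def
proof (safe)
  show "length hs = length ws" using assms by (simp add: Hset_def)
  fix k l assume kl: "k < l" "l < length ws" "ws ! l = ws ! k"
    and nb: "\<forall>j. k < j \<and> j < l \<longrightarrow> ws ! j \<noteq> ws ! k"
  have "\<forall>j. Suc k < j \<and> j < Suc l \<longrightarrow> (w#ws) ! j \<noteq> (w#ws) ! Suc k"
  proof (intro allI impI)
    fix j assume "Suc k < j \<and> j < Suc l"
    then obtain j' where "j = Suc j'" "k < j'" "j' < l" by (cases j) auto
    then show "(w#ws) ! j \<noteq> (w#ws) ! Suc k" using nb by simp
  qed
  note nb2 = this
  have imp: "Suc k < Suc l \<and> Suc l < length (w#ws) \<and> (w#ws) ! Suc l = (w#ws) ! Suc k \<and>
      (\<forall>j. Suc k < j \<and> j < Suc l \<longrightarrow> (w#ws) ! j \<noteq> (w#ws) ! Suc k) \<longrightarrow>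
      (h#hs) ! Suc k + (\<Sum>j\<in>{Suc k<..<Suc l}. a ((w#ws) ! Suc k) ((w#ws) ! j) * (h#hs) ! j) + (h#hs) ! Suc l = 0"
    using Hset_D[OF assms, of "Suc k" "Suc l"] by blast
  have pre: "Suc k < Suc l \<and> Suc l < length (w#ws) \<and> (w#ws) ! Suc l = (w#ws) ! Suc k \<and>
      (\<forall>j. Suc k < j \<and> j < Suc l \<longrightarrow> (w#ws) ! j \<noteq> (w#ws) ! Suc k)"
    using kl nb2 by simp
  have "(h#hs) ! Suc k + (\<Sum>j\<in>{Suc k<..<Suc l}. a ((w#ws) ! Suc k) ((w#ws) ! j) * (h#hs) ! j) + (h#hs) ! Suc l = 0"
    using imp pre by blast
  then show "hs ! k + (\<Sum>j\<in>{k<..<l}. a (ws ! k) (ws ! j) * hs ! j) + hs ! l = 0"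
    unfolding shift_sum by simp
qed

lemma cst_first:
  "length hs = length ws \<Longrightarrow> k < length ws \<Longrightarrow> ws ! k = i \<Longrightarrow> (\<forall>j<k. ws ! j \<noteq> i) \<Longrightarrow>
   cst a i ws hs = - (hs ! k) - (\<Sum>j<k. a i (ws ! j) * hs ! j)"
proof (induction ws arbitrary: hs k)
  case Nil then show ?case by simp
next
  case (Cons w ws)
  then obtain h hs' where hs: "hs = h # hs'" by (cases hs) auto
  show ?case
  proof (cases k)
    case 0 then show ?thesis using Cons.prems hs by simp
  next
    case (Suc k')
    have "w \<noteq> i" using Cons.prems Suc by auto
    have ih: "cst a i ws hs' = - (hs' ! k') - (\<Sum>j<k'. a i (ws ! j) * hs' ! j)"
      using Cons.prems Suc hs by (intro Cons.IH) auto
    have "(\<Sum>j<Suc k'. a i ((w#ws) ! j) * (h#hs') ! j) = a i w * h + (\<Sum>j<k'. a i (ws ! j) * hs' ! j)"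
      unfolding sum.lessThan_Suc_shift by simp
    then show ?thesis using ih `w \<noteq> i` hs Suc by simp
  qed
qed

lemma cst_head:
  assumes "h # hs \<in> Hset a (i # ws)" "i \<in> set ws"
  shows "cst a i ws hs = h"
proof -
  have len: "length hs = length ws" using assms by (simp add: Hset_def)
  define k where "k = (LEAST k. k < length ws \<and> ws ! k = i)"
  have ex: "\<exists>k. k < length ws \<and> ws ! k = i" using assms(2) by (simp add: in_set_conv_nth)
  have k: "k < length ws" "ws ! k = i" using LeastI_ex[OF ex] unfolding k_def by auto
  have nb: "\<forall>j<k. ws ! j \<noteq> i"
  proof (intro allI impI)
    fix j assume "j < k"
    then have "\<not> (j < length ws \<and> ws ! j = i)" unfolding k_def by (rule not_less_Least)
    then show "ws ! j \<noteq> i" using `j < k` k(1) by simp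
  qed
  have c: "cst a i ws hs = - (hs ! k) - (\<Sum>j<k. a i (ws ! j) * hs ! j)"
    using cst_first[OF len k nb] .
  have nb2: "\<forall>j. 0 < j \<and> j < Suc k \<longrightarrow> (i#ws) ! j \<noteq> (i#ws) ! 0"
  proof (intro allI impI)
    fix j assume "0 < j \<and> j < Suc k"
    then obtain j' where "j = Suc j'" "j' < k" by (cases j) auto
    then show "(i#ws) ! j \<noteq> (i#ws) ! 0" using nb by simp
  qed
  have "(h#hs) ! 0 + (\<Sum>j\<in>{0<..<Suc k}. a ((i#ws) ! 0) ((i#ws) ! j) * (h#hs) ! j) + (h#hs) ! Suc k = 0"
    by (rule Hset_D[OF assms(1)]) (use k nb2 in simp_all)
  moreover have "(\<Sum>j\<in>{0<..<Suc k}. a ((i#ws) ! 0) ((i#ws) ! j) * (h#hs) ! j) = (\<Sum>j<k. a i (ws ! j) * hs ! j)"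
  proof -
    show ?thesis unfolding shift_sum0 by simp
  qed
  ultimately show ?thesis using c by simp
qed

lemma pairing_single: "pairing a i (wtT [w] [x]) = a i w * x"
proof -
  have "(\<Sum>j\<in>UNIV. a i j * wtT [w] [x] j) = (\<Sum>j\<in>UNIV. if j = w then a i w * x else 0)"
    by (rule sum.cong) auto
  then show ?thesis by (simp only: pairing_def) simp
qed

lemma epsT_Cons: "length xs = length ws \<Longrightarrow>
  epsT a i (w # ws) (x # xs) = max (eps1 i w x) (epsT a i ws xs - ereal (of_int (a i w * x)))"
  by (cases ws; cases xs) (simp_all add: pairing_single del: wtT.simps)

lemma epsT_notin: "i \<notin> set ws \<Longrightarrow> length xs = length ws \<Longrightarrow> epsT a i ws xs = - \<infinity>"
proof (induction ws arbitrary: xs)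
  case Nil then show ?case by simp
next
  case (Cons w ws)
  then obtain x xs' where "xs = x # xs'" by (cases xs) auto
  then show ?case using Cons by (simp add: epsT_Cons eps1_def)
qed

lemma epsT_add:
  "(\<And>j. a j j = 2) \<Longrightarrow> hs \<in> Hset a ws \<Longrightarrow> length xs = length ws \<Longrightarrow>
   epsT a i ws (vadd xs hs) = epsT a i ws xs + ereal (of_int (cst a i ws hs))"
proof (induction ws arbitrary: xs hs)
  case Nil then show ?case by (simp)
next
  case (Cons w ws)
  then obtain h hs' where hs: "hs = h # hs'" by (cases hs) (auto simp: Hset_def)
  obtain x xs' where xs: "xs = x # xs'" using Cons.prems by (cases xs) auto
  have tl: "hs' \<in> Hset a ws" using Hset_tl[of h hs' a w ws] Cons.prems(2) hs by simp
  have len: "length hs' = length ws" "length xs' = length ws" using tl Cons.prems xs by (auto simp: Hset_def)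
  have ih: "epsT a i ws (vadd xs' hs') = epsT a i ws xs' + ereal (of_int (cst a i ws hs'))"
    using Cons.IH[OF Cons.prems(1) tl len(2)] .
  show ?case
  proof (cases "w = i")
    case True
    show ?thesis
    proof (cases "i \<in> set ws")
      case True
      have c: "cst a i ws hs' = h" using cst_head[of h hs' a i ws] Cons.prems(2) hs `w = i` True by simp
      have aii: "a i i = 2" by (rule Cons.prems(1))
      show ?thesis using `w = i` xs hs len ih c aii
        by (cases "epsT a i ws xs'") (simp_all add: epsT_Cons eps1_def algebra_simps max_def)
    next
      case False
      then have "epsT a i ws xs' = - \<infinity>" "epsT a i ws (vadd xs' hs') = - \<infinity>"
        using epsT_notin[of i ws] len by (auto simp: vadd_def)
      then show ?thesis using `w = i` xs hs len
        by (simp add: epsT_Cons eps1_def algebra_simps)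
    qed
  next
    case False
    then show ?thesis using xs hs len ih
        by (cases "epsT a i ws xs'") (simp_all add: epsT_Cons eps1_def algebra_simps)
  qed
qed

lemma eT_Cons: "length xs = length ws \<Longrightarrow>
  eT a i (w # ws) (x # xs) = (if phi1 i w x \<ge> epsT a i ws xs
      then (if i = w then Some ((x + 1) # xs) else None)
      else map_option (\<lambda>ys. x # ys) (eT a i ws xs))"
  by (cases ws; cases xs) auto

lemma fT_Cons: "length xs = length ws \<Longrightarrow>
  fT a i (w # ws) (x # xs) = (if phi1 i w x > epsT a i ws xs
      then (if i = w then Some ((x - 1) # xs) else None)
      else map_option (\<lambda>ys. x # ys) (fT a i ws xs))"
  by (cases ws; cases xs) (auto simp: phi1_def)

lemma cond_equiv:
  assumes aii: "\<And>j. a j j = 2" and H: "h # hs \<in> Hset a (w # ws)"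
    and len: "length xs = length ws"
  shows "(phi1 i w (x + h) \<ge> epsT a i ws (vadd xs hs)) = (phi1 i w x \<ge> epsT a i ws xs)"
    and "(phi1 i w (x + h) > epsT a i ws (vadd xs hs)) = (phi1 i w x > epsT a i ws xs)"
proof -
  have tl: "hs \<in> Hset a ws" using Hset_tl[OF H] .
  have e: "epsT a i ws (vadd xs hs) = epsT a i ws xs + ereal (of_int (cst a i ws hs))"
    using epsT_add[OF aii tl len] .
  have "((phi1 i w (x + h) \<ge> epsT a i ws (vadd xs hs)) = (phi1 i w x \<ge> epsT a i ws xs)) \<and>
    ((phi1 i w (x + h) > epsT a i ws (vadd xs hs)) = (phi1 i w x > epsT a i ws xs))"
  proof (cases "w = i")
    case True
    show ?thesis
    proof (cases "i \<in> set ws")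
      case True
      have c: "cst a i ws hs = h" using cst_head[of h hs a i ws] H `w = i` True by simp
      show ?thesis using e c `w = i`
        by (cases "epsT a i ws xs") (simp_all add: phi1_def)
    next
      case False
      then have "epsT a i ws xs = - \<infinity>" by (rule epsT_notin) (rule len)
      then show ?thesis using e `w = i` by (simp add: phi1_def)
    qed
  next
    case False
    then show ?thesis using e
      by (cases "epsT a i ws xs") (simp_all add: phi1_def)
  qed
  then show "(phi1 i w (x + h) \<ge> epsT a i ws (vadd xs hs)) = (phi1 i w x \<ge> epsT a i ws xs)"
    and "(phi1 i w (x + h) > epsT a i ws (vadd xs hs)) = (phi1 i w x > epsT a i ws xs)" by auto
qed

lemma eT_fT_add:
  assumes "\<And>j. a j j = 2"
  shows "H \<in> Hset a ws \<Longrightarrow> length x = length ws \<Longrightarrow>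
    eT a i ws (vadd x H) = map_option (\<lambda>y. vadd y H) (eT a i ws x)
     \<and> fT a i ws (vadd x H) = map_option (\<lambda>y. vadd y H) (fT a i ws x)"
proof (induction ws arbitrary: x H)
  case Nil then show ?case by (cases x) auto
next
  case (Cons w ws)
  then obtain h hs where H: "H = h # hs" by (cases H) (auto simp: Hset_def)
  obtain x0 xs where x: "x = x0 # xs" using Cons.prems by (cases x) auto
  have tl: "hs \<in> Hset a ws" using Hset_tl[of h hs a w ws] Cons.prems(1) H by simp
  have len: "length hs = length ws" "length xs = length ws" using tl Cons.prems x by (auto simp: Hset_def)
  have lenv: "length (vadd xs hs) = length ws" using len by simp
  have ih: "eT a i ws (vadd xs hs) = map_option (\<lambda>y. vadd y hs) (eT a i ws xs)"
     "fT a i ws (vadd xs hs) = map_option (\<lambda>y. vadd y hs) (fT a i ws xs)"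
    using Cons.IH[OF tl len(2)] by auto
  have ce: "(phi1 i w (x0 + h) \<ge> epsT a i ws (vadd xs hs)) = (phi1 i w x0 \<ge> epsT a i ws xs)"
     "(phi1 i w (x0 + h) > epsT a i ws (vadd xs hs)) = (phi1 i w x0 > epsT a i ws xs)"
    using cond_equiv[OF assms Cons.prems(1)[unfolded H] len(2)] by auto
  show ?case
    unfolding x H vadd_Cons eT_Cons[OF lenv] eT_Cons[OF len(2)] fT_Cons[OF lenv] fT_Cons[OF len(2)] ce ih
    by (cases "eT a i ws xs"; cases "fT a i ws xs") (auto simp: algebra_simps)
qed

theorem proposition8p2:
  fixes a :: "'i::finite \<Rightarrow> 'i \<Rightarrow> int" and ws :: "'i list"
    and i :: 'i and x H :: "int list"
  assumes "finite_type_cartan a"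
    and "reduced_word_w0 a ws"
    and "length x = length ws"
    and "H \<in> Hset a ws"
  shows "eT a i ws (vadd x H) = map_option (\<lambda>y. vadd y H) (eT a i ws x)
     \<and> fT a i ws (vadd x H) = map_option (\<lambda>y. vadd y H) (fT a i ws x)"
proof -
  have "\<forall>j. a j j = 2" using assms(1) unfolding finite_type_cartan_def by (rule conjunct1)
  then have "\<And>j. a j j = 2" by simp
  then show ?thesis by (rule eT_fT_add[OF _ assms(4,3)])
qed

end
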